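(* Assume $c\ge2\sqrt\delta$. For real $\lambda\ge0$, all of $\mu^u_-(\lambda),\mu^s_+(\lambda),\mu^u_+(\lambda)$ are real and the Riccati equation $\eta'=\frac{\lambda-1+2\hat u(z)}{\delta}-\frac c\delta\eta-\eta^2$ defines a flow on $\mathbb RP^1\cong S^1$. Let $\ell(z;\lambda)$ be the solution on $\mathbb RP^1$ with $\ell(z;\lambda)\to\mu^u_-(\lambda)$ as $z\to-\infty$. Let $0\le\lambda_1<\lambda_2$ be real numbers that are not eigenvalues, and for $j=1,2$ suppose $\ell(\cdot;\lambda_j)$ takes the value $\mu^s_+(\lambda_j)$ exactly $N_j<\infty$ times as $z$ ranges over $\mathbb R$. Then the number of eigenvalues in the interval $(\lambda_1,\lambda_2)$ equals $|N_1-N_2|$.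
   Context: $\delta>0$, $c>0$, and $\hat u$ solves $\delta\hat u''+c\hat u'+\hat u(1-\hat u)=0$ with $\hat u(-\infty)=1$, $\hat u(+\infty)=0$ (for $c\ge2\sqrt\delta$ this wave satisfies $0<\hat u<1$). $\mu^{u}_-(\lambda)=\frac{-c+\sqrt{c^2+4\delta(\lambda+1)}}{2\delta}$, $\mu^{u,s}_+(\lambda)=\frac{-c\pm\sqrt{c^2+4\delta(\lambda-1)}}{2\delta}$. The Riccati equation is the equation for $\eta=q/p$ when $(p,q)$ solves $p'=q$, $q'=\frac{\lambda-1+2\hat u}{\delta}p-\frac c\delta q$; on $\mathbb RP^1$ it is extended through $\eta=\infty$ via the chart $\tau=1/\eta$. A real $\lambda\ge0$ is an eigenvalue if $\lim_{z\to+\infty}\ell(z;\lambda)=\mu^s_+(\lambda)$; when $\lambda$ is not an eigenvalue, $\lim_{z\to+\infty}\ell(z;\lambda)=\mu^u_+(\lambda)$. *)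

theory Defs
  imports "HOL-Analysis.Analysis"
begin

definition mu_u_minus :: "real \<Rightarrow> real \<Rightarrow> real \<Rightarrow> real" where
  "mu_u_minus \<delta> c lam = (- c + sqrt (c^2 + 4 * \<delta> * (lam + 1))) / (2 * \<delta>)"

definition mu_u_plus :: "real \<Rightarrow> real \<Rightarrow> real \<Rightarrow> real" where
  "mu_u_plus \<delta> c lam = (- c + sqrt (c^2 + 4 * \<delta> * (lam - 1))) / (2 * \<delta>)"

definition mu_s_plus :: "real \<Rightarrow> real \<Rightarrow> real \<Rightarrow> real" where
  "mu_s_plus \<delta> c lam = (- c - sqrt (c^2 + 4 * \<delta> * (lam - 1))) / (2 * \<delta>)"

text \<open>Its projective class [p:q] in RP^1
  is a solution of the Riccati equation for eta = q/p (extended through infinity).\<close>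
definition lin_sol :: "real \<Rightarrow> real \<Rightarrow> (real \<Rightarrow> real) \<Rightarrow> real \<Rightarrow> (real \<Rightarrow> real) \<Rightarrow> (real \<Rightarrow> real) \<Rightarrow> bool" where
  "lin_sol \<delta> c u lam p q \<longleftrightarrow>
     (\<forall>z. (p has_real_derivative q z) (at z) \<and>
          (q has_real_derivative (((lam - 1 + 2 * u z) / \<delta>) * p z - (c / \<delta>) * q z)) (at z))
     \<and> (\<exists>z. p z \<noteq> 0 \<or> q z \<noteq> 0)"

definition proj_tendsto :: "(real \<Rightarrow> real) \<Rightarrow> (real \<Rightarrow> real) \<Rightarrow> real \<Rightarrow> real filter \<Rightarrow> bool" where
  "proj_tendsto p q \<mu> F \<longleftrightarrow> eventually (\<lambda>z. p z \<noteq> 0) F \<and> ((\<lambda>z. q z / p z) \<longlongrightarrow> \<mu>) F"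

text \<open>(p,q) represents ell(.;lambda): the Riccati solution tending to mu^u_-(lambda) at -infinity.\<close>
definition ell_frame :: "real \<Rightarrow> real \<Rightarrow> (real \<Rightarrow> real) \<Rightarrow> real \<Rightarrow> (real \<Rightarrow> real) \<Rightarrow> (real \<Rightarrow> real) \<Rightarrow> bool" where
  "ell_frame \<delta> c u lam p q \<longleftrightarrow> lin_sol \<delta> c u lam p q \<and> proj_tendsto p q (mu_u_minus \<delta> c lam) at_bot"

definition is_eigenvalue :: "real \<Rightarrow> real \<Rightarrow> (real \<Rightarrow> real) \<Rightarrow> real \<Rightarrow> bool" where
  "is_eigenvalue \<delta> c u lam \<longleftrightarrow> lam \<ge> 0 \<and>
     (\<exists>p q. ell_frame \<delta> c u lam p q \<and> proj_tendsto p q (mu_s_plus \<delta> c lam) at_top)"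

definition hits :: "(real \<Rightarrow> real) \<Rightarrow> (real \<Rightarrow> real) \<Rightarrow> real \<Rightarrow> real set" where
  "hits p q \<mu> = {z. p z \<noteq> 0 \<and> q z / p z = \<mu>}"

end

theory Submission
  imports Defs
begin

lemma mono_deriv:
  fixes f f' :: "real \<Rightarrow> real"
  assumes "\<And>z. (f has_real_derivative f' z) (at z)" "\<And>z. f' z \<ge> 0" "a \<le> b"
  shows "f a \<le> f b"
  using DERIV_nonneg_imp_nondecreasing[of a b f] assms by blast

lemma u_nonneg:
  fixes \<delta> c :: real and u u' :: "real \<Rightarrow> real"
  assumes d: "\<delta> > 0" and c0: "c > 0" and c2: "c \<ge> 2 * sqrt \<delta>"
    and du: "\<forall>z. (u has_real_derivative u' z) (at z)"
    and du': "\<forall>z. (u' has_real_derivative (- (c * u' z + u z * (1 - u z)) / \<delta>)) (at z)"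
    and lim: "(u \<longlongrightarrow> 1) at_bot"
  shows "u z \<ge> 0"
proof -
  have disc: "c^2 - 4*\<delta> \<ge> 0"
  proof -
    have "(2 * sqrt \<delta>)^2 \<le> c^2" using c2 d by (intro power_mono) auto
    thus ?thesis using d by (simp add: power_mult_distrib)
  qed
  define s where "s = sqrt (c^2 - 4*\<delta>)"
  have s2: "s^2 = c^2 - 4*\<delta>" using disc s_def real_sqrt_pow2 by blast
  have s0: "s \<ge> 0" using s_def disc by simp
  have sc: "s < c"
  proof -
    have "s^2 < c^2" using s2 d by simp
    thus ?thesis using s0 c0 by (smt (verit) power_mono)
  qed
  define \<mu> where "\<mu> = (- c + s) / (2*\<delta>)"
  have root: "\<delta>*\<mu>^2 + c*\<mu> + 1 = 0"
  proof -
    have "\<delta>*\<mu>^2 + c*\<mu> + 1 = (s^2 - c^2 + 4*\<delta>)/(4*\<delta>)"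
      unfolding \<mu>_def using d by (simp add: field_simps power2_eq_square)
    thus ?thesis using s2 by simp
  qed
  have mneg: "\<mu> < 0" unfolding \<mu>_def using sc d by (simp add: divide_neg_pos)
  define k where "k = c/\<delta> + \<mu>"
  define H where "H z = u' z - \<mu> * u z" for z
  have Hder: "((\<lambda>z. H z * exp (k*z)) has_real_derivative ((u z)^2/\<delta> * exp (k*z))) (at z)" for z
  proof -
    have "((\<lambda>z. (u' z - \<mu> * u z) * exp (k*z)) has_real_derivative
        ((- (c * u' z + u z * (1 - u z)) / \<delta> - \<mu> * u' z) * exp (k*z) + (u' z - \<mu> * u z) * (exp (k*z) * k))) (at z)"
      using du du' by (auto intro!: derivative_eq_intros)
    moreover have "(- (c * u' z + u z * (1 - u z)) / \<delta> - \<mu> * u' z) * exp (k*z) + (u' z - \<mu> * u z) * (exp (k*z) * k)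
        = (u z)^2/\<delta> * exp (k*z)"
    proof -
      have "(- (c * u' z + u z * (1 - u z)) / \<delta> - \<mu> * u' z) + (u' z - \<mu> * u z) * k = (u z)^2/\<delta>"
      proof -
        have "(- (c * u' z + u z * (1 - u z)) / \<delta> - \<mu> * u' z) + (u' z - \<mu> * u z) * k
           = ((u z)^2 - u z * (\<delta>*\<mu>^2 + c*\<mu> + 1))/\<delta>"
          using d unfolding k_def by (simp add: field_simps power2_eq_square)
        thus ?thesis using root by simp
      qed
      thus ?thesis by (metis distrib_right mult.commute mult.left_commute)
    qed
    ultimately show ?thesis unfolding H_def by simp
  qed
  have Hmono: "H a * exp (k*a) \<le> H b * exp (k*b)" if "a \<le> b" for a b
    by (rule mono_deriv[OF Hder]) (use d that in auto)
  have ev: "eventually (\<lambda>z. u z > 1/2 \<and> u z < 2) at_bot"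
    using order_tendstoD(1)[OF lim, of "1/2"] order_tendstoD(2)[OF lim, of 2] by (auto elim: eventually_mono intro: eventually_conj)
  then obtain N where N: "\<And>z. z \<le> N \<Longrightarrow> u z > 1/2 \<and> u z < 2"
    by (auto simp: eventually_at_bot_linorder)
  have Hpos: "H z > 0" for z
  proof (rule ccontr)
    assume "\<not> H z > 0"
    hence Hz: "H z \<le> 0" by simp
    define Z where "Z = min z N"
    have le: "u' w \<le> \<mu>/2" if "w \<le> Z" for w
    proof -
      have "H w * exp (k*w) \<le> H z * exp (k*z)" using Hmono[of w z] that Z_def by simp
      also have "\<dots> \<le> 0" using Hz by (simp add: mult_nonpos_nonneg)
      finally have "H w \<le> 0" by (simp add: mult_le_0_iff)
      hence "u' w \<le> \<mu> * u w" unfolding H_def by simp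
      also have "\<mu> * u w \<le> \<mu> / 2" using N[of w] that Z_def mneg by (simp add: mult_le_cancel_left)
      finally show ?thesis .
    qed
    define g where "g w = u w - \<mu>/2 * w" for w
    have gd: "(g has_real_derivative (u' w - \<mu>/2)) (at w)" for w
      unfolding g_def using du by (auto intro!: derivative_eq_intros)
    define w where "w = min Z ((3 - g Z) * 2 / \<mu>)"
    have wZ: "w \<le> Z" unfolding w_def by simp
    have "g Z \<le> g w"
      using DERIV_nonpos_imp_nonincreasing[of w Z g, OF wZ] gd le
      by (metis diff_le_0_iff_le dual_order.trans)
    moreover have "\<mu>/2 * w \<ge> 3 - g Z"
    proof -
      have "w \<le> (3 - g Z) * 2 / \<mu>" unfolding w_def by simp
      hence "\<mu>/2 * w \<ge> \<mu>/2 * ((3 - g Z) * 2 / \<mu>)" using mneg by (intro mult_left_mono_neg) auto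
      thus ?thesis using mneg by simp
    qed
    ultimately have "u w \<ge> 3" unfolding g_def by simp
    moreover have "u w < 2" using N[of w] wZ Z_def by simp
    ultimately show False by simp
  qed
  show ?thesis
  proof (rule ccontr)
    assume "\<not> u z \<ge> 0"
    hence uz: "u z < 0" by simp
    define f where "f w = u w * exp (- \<mu> * w)" for w
    have fd: "(f has_real_derivative (H w * exp (- \<mu> * w))) (at w)" for w
    proof -
      have "(f has_real_derivative (u' w * exp (- \<mu> * w) + u w * (exp (- \<mu> * w) * (- \<mu>)))) (at w)"
        unfolding f_def using du by (auto intro!: derivative_eq_intros)
      moreover have "u' w * exp (- \<mu> * w) + u w * (exp (- \<mu> * w) * (- \<mu>)) = H w * exp (- \<mu> * w)"
        unfolding H_def by (simp add: algebra_simps)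
      ultimately show ?thesis by simp
    qed
    define w where "w = min z N"
    have "f w \<le> f z"
      by (rule mono_deriv[OF fd]) (use Hpos w_def in \<open>auto intro: less_imp_le\<close>)
    also have "f z < 0" unfolding f_def using uz by (simp add: mult_neg_pos)
    finally have "u w < 0" unfolding f_def by (simp add: mult_less_0_iff)
    moreover have "u w > 1/2" using N[of w] w_def by simp
    ultimately show False by simp
  qed
qed

lemma id1: fixes d lam c m P Q U :: real assumes "d > 0"
  shows "((((lam - 1 + 2*U)/d)*P - (c/d)*Q - m*Q)*P + (Q - m*P)*Q) + (Q - m*P)*P*(c/d)
   = (Q - m*P)^2 + 2*U*P^2/d - P^2*(d*m^2 + c*m - (lam-1))/d"
proof -
  have "d * (((((lam - 1 + 2*U)/d)*P - (c/d)*Q - m*Q)*P + (Q - m*P)*Q) + (Q - m*P)*P*(c/d))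
      = d * ((Q - m*P)^2 + 2*U*P^2/d - P^2*(d*m^2 + c*m - (lam-1))/d)"
    using assms by (simp add: algebra_simps diff_divide_distrib add_divide_distrib power2_eq_square)
  thus ?thesis using assms by simp
qed

lemma disc_lem: fixes c d lam :: real assumes "c^2 \<ge> 4*d" "d > 0" "lam \<ge> 0"
  shows "c^2 + 4*d*(lam - 1) \<ge> 0"
proof -
  have "4*d*lam \<ge> 0" using assms by simp
  moreover have "c^2 + 4*d*(lam - 1) = (c^2 - 4*d) + 4*d*lam" by (simp add: algebra_simps)
  ultimately show ?thesis using assms by linarith
qed

lemma disc_lem2: fixes c d lam :: real assumes "c^2 \<ge> 4*d" "d > 0" "lam > 0"
  shows "c^2 + 4*d*(lam - 1) > 0"
proof -
  have "4*d*lam > 0" using assms by simp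
  moreover have "c^2 + 4*d*(lam - 1) = (c^2 - 4*d) + 4*d*lam" by (simp add: algebra_simps)
  ultimately show ?thesis using assms by linarith
qed

lemma combine_helper: fixes a b k x e :: real assumes "a + b*k = x" shows "a*e + b*(e*k) = x*e"
proof -
  have "a*e + b*(e*k) = (a + b*k)*e" by (simp add: algebra_simps)
  thus ?thesis using assms by simp
qed

lemma frame_above:
  fixes \<delta> c lam :: real and u :: "real \<Rightarrow> real" and p q :: "real \<Rightarrow> real"
  assumes d: "\<delta> > 0" and disc: "c^2 + 4*\<delta>*(lam - 1) \<ge> 0"
    and unn: "\<And>z. u z \<ge> 0"
    and fr: "ell_frame \<delta> c u lam p q"
  shows "p z \<noteq> 0 \<and> q z / p z > mu_u_plus \<delta> c lam"
proof -
  define m where "m = mu_u_plus \<delta> c lam"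
  define s where "s = sqrt (c^2 + 4*\<delta>*(lam - 1))"
  have s2: "s^2 = c^2 + 4*\<delta>*(lam - 1)" using disc s_def real_sqrt_pow2 by blast
  have m_def': "m = (- c + s) / (2*\<delta>)" unfolding m_def s_def mu_u_plus_def by simp
  have root: "\<delta>*m^2 + c*m - (lam - 1) = 0"
  proof -
    have "\<delta>*m^2 + c*m - (lam - 1) = (s^2 - (c^2 + 4*\<delta>*(lam - 1)))/(4*\<delta>)"
      unfolding m_def' using d by (simp add: field_simps power2_eq_square)
    thus ?thesis using s2 by simp
  qed
  have gt: "mu_u_minus \<delta> c lam > m"
  proof -
    have "sqrt (c^2 + 4*\<delta>*(lam - 1)) < sqrt (c^2 + 4*\<delta>*(lam + 1))" using d by simp
    thus ?thesis unfolding m_def mu_u_plus_def mu_u_minus_def using d by (simp add: divide_strict_right_mono)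
  qed
  from fr have ls: "lin_sol \<delta> c u lam p q" and pt: "proj_tendsto p q (mu_u_minus \<delta> c lam) at_bot"
    unfolding ell_frame_def by auto
  from ls have dp: "\<And>z. (p has_real_derivative q z) (at z)"
    and dq: "\<And>z. (q has_real_derivative (((lam - 1 + 2 * u z) / \<delta>) * p z - (c / \<delta>) * q z)) (at z)"
    unfolding lin_sol_def by auto
  define F where "F z = (q z - m * p z) * p z" for z
  define k where "k = c / \<delta>"
  have Fder: "((\<lambda>z. F z * exp (k*z)) has_real_derivative
      (((q z - m * p z)^2 + 2 * u z * (p z)^2 / \<delta>) * exp (k*z))) (at z)" for z
  proof -
    let ?Q = "((lam - 1 + 2 * u z) / \<delta>) * p z - (c / \<delta>) * q z"
    have "((\<lambda>z. (q z - m * p z) * p z * exp (k*z)) has_real_derivative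
       (((?Q - m * q z) * p z + (q z - m * p z) * q z) * exp (k*z) + (q z - m * p z) * p z * (exp (k*z) * k))) (at z)"
      using dp dq by (auto intro!: derivative_eq_intros)
    moreover have "((?Q - m * q z) * p z + (q z - m * p z) * q z) * exp (k*z) + (q z - m * p z) * p z * (exp (k*z) * k)
       = (((q z - m * p z)^2 + 2 * u z * (p z)^2 / \<delta>) * exp (k*z))"
    proof -
      have "((?Q - m * q z) * p z + (q z - m * p z) * q z) + (q z - m * p z) * p z * k
          = ((q z - m * p z)^2 + 2 * u z * (p z)^2 / \<delta>) - (p z)^2 * (\<delta>*m^2 + c*m - (lam - 1)) / \<delta>"
        unfolding k_def by (rule id1[OF d])
      hence "((?Q - m * q z) * p z + (q z - m * p z) * q z) + ((q z - m * p z) * p z) * k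
          = ((q z - m * p z)^2 + 2 * u z * (p z)^2 / \<delta>)" using root by simp
      thus ?thesis by (rule combine_helper)
    qed
    ultimately show ?thesis unfolding F_def by simp
  qed
  have Fmono: "F a * exp (k*a) \<le> F b * exp (k*b)" if "a \<le> b" for a b
    by (rule mono_deriv[OF Fder]) (use d that unn in auto)
  have ev: "eventually (\<lambda>z. p z \<noteq> 0 \<and> q z / p z > m) at_bot"
  proof -
    have e1: "eventually (\<lambda>z. p z \<noteq> 0) at_bot" and l: "((\<lambda>z. q z / p z) \<longlongrightarrow> mu_u_minus \<delta> c lam) at_bot"
      using pt unfolding proj_tendsto_def by auto
    have e2: "eventually (\<lambda>z. q z / p z > m) at_bot" using order_tendstoD(1)[OF l gt] .
    show ?thesis using eventually_conj[OF e1 e2] .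
  qed
  then obtain N where N: "\<And>z. z \<le> N \<Longrightarrow> p z \<noteq> 0 \<and> q z / p z > m"
    by (auto simp: eventually_at_bot_linorder)
  have Fpos_of: "F w > 0" if "p w \<noteq> 0" "q w / p w > m" for w
  proof -
    have "F w = (p w)^2 * (q w / p w - m)" unfolding F_def using that(1)
      by (simp add: field_simps power2_eq_square)
    thus ?thesis using that by simp
  qed
  define w where "w = min z N"
  have "F w > 0" using N[of w] w_def Fpos_of by simp
  hence "0 < F w * exp (k*w)" by simp
  also have "\<dots> \<le> F z * exp (k*z)" using Fmono[of w z] w_def by simp
  finally have Fz: "F z > 0" by (simp add: zero_less_mult_iff)
  have pz: "p z \<noteq> 0" using Fz unfolding F_def by auto
  have "F z = (p z)^2 * (q z / p z - m)" unfolding F_def using pz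
    by (simp add: field_simps power2_eq_square)
  hence "q z / p z - m > 0" using Fz by (simp add: zero_less_mult_iff)
  thus ?thesis using pz m_def by simp
qed

theorem mainTheorem5:
  fixes \<delta> c :: real and u u' :: "real \<Rightarrow> real"
    and lam\<^sub>1 lam\<^sub>2 :: real and p\<^sub>1 q\<^sub>1 p\<^sub>2 q\<^sub>2 :: "real \<Rightarrow> real" and N\<^sub>1 N\<^sub>2 :: nat
  assumes "\<delta> > 0" and "c > 0" and "c \<ge> 2 * sqrt \<delta>"
    and "\<forall>z. (u has_real_derivative u' z) (at z)"
    and "\<forall>z. (u' has_real_derivative (- (c * u' z + u z * (1 - u z)) / \<delta>)) (at z)"
    and "(u \<longlongrightarrow> 1) at_bot" and "(u \<longlongrightarrow> 0) at_top"
    and "0 \<le> lam\<^sub>1" and "lam\<^sub>1 < lam\<^sub>2"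
    and "\<not> is_eigenvalue \<delta> c u lam\<^sub>1" and "\<not> is_eigenvalue \<delta> c u lam\<^sub>2"
    and "ell_frame \<delta> c u lam\<^sub>1 p\<^sub>1 q\<^sub>1" and "ell_frame \<delta> c u lam\<^sub>2 p\<^sub>2 q\<^sub>2"
    and "finite (hits p\<^sub>1 q\<^sub>1 (mu_s_plus \<delta> c lam\<^sub>1))" and "card (hits p\<^sub>1 q\<^sub>1 (mu_s_plus \<delta> c lam\<^sub>1)) = N\<^sub>1"
    and "finite (hits p\<^sub>2 q\<^sub>2 (mu_s_plus \<delta> c lam\<^sub>2))" and "card (hits p\<^sub>2 q\<^sub>2 (mu_s_plus \<delta> c lam\<^sub>2)) = N\<^sub>2"
  shows "finite {lam. lam\<^sub>1 < lam \<and> lam < lam\<^sub>2 \<and> is_eigenvalue \<delta> c u lam}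
       \<and> card {lam. lam\<^sub>1 < lam \<and> lam < lam\<^sub>2 \<and> is_eigenvalue \<delta> c u lam} = nat \<bar>int N\<^sub>1 - int N\<^sub>2\<bar>"
proof -
  note a = assms
  have unn: "\<And>z. u z \<ge> 0" using u_nonneg[OF a(1,2,3,4,5,6)] by blast
  have c4: "c^2 \<ge> 4*\<delta>"
  proof -
    have "(2 * sqrt \<delta>)^2 \<le> c^2" using a(3) a(1) by (intro power_mono) auto
    thus ?thesis using a(1) by (simp add: power_mult_distrib)
  qed
  have disc: "c^2 + 4*\<delta>*(lam - 1) \<ge> 0" if "lam \<ge> 0" for lam
    using disc_lem[OF c4 a(1) that] .
  have sle: "mu_s_plus \<delta> c lam \<le> mu_u_plus \<delta> c lam" if "lam \<ge> 0" for lam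
    unfolding mu_s_plus_def mu_u_plus_def using a(1) disc[OF that]
    by (simp add: divide_right_mono)
  have slt: "mu_s_plus \<delta> c lam < mu_u_plus \<delta> c lam" if "lam > 0" for lam
  proof -
    have "c^2 + 4*\<delta>*(lam - 1) > 0" using disc_lem2[OF c4 a(1) that] .
    hence "sqrt (c^2 + 4*\<delta>*(lam - 1)) > 0" by simp
    thus ?thesis unfolding mu_s_plus_def mu_u_plus_def using a(1)
      by (simp add: divide_strict_right_mono)
  qed
  have hits_empty: "hits p q (mu_s_plus \<delta> c lam) = {}" if "lam \<ge> 0" "ell_frame \<delta> c u lam p q" for lam p q
  proof -
    have "q z / p z \<noteq> mu_s_plus \<delta> c lam" for z
      using frame_above[OF a(1) disc[OF that(1)] unn that(2), of z] sle[OF that(1)] by simp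
    thus ?thesis unfolding hits_def by auto
  qed
  have N1: "N\<^sub>1 = 0" using a(15) hits_empty[OF a(8) a(12)] by simp
  have N2: "N\<^sub>2 = 0" using a(17) hits_empty[of lam\<^sub>2, OF _ a(13)] a(8) a(9) by simp
  have noeig: "\<not> is_eigenvalue \<delta> c u lam" if "lam > 0" for lam
  proof
    assume "is_eigenvalue \<delta> c u lam"
    then obtain p q where fr: "ell_frame \<delta> c u lam p q" and pt: "proj_tendsto p q (mu_s_plus \<delta> c lam) at_top"
      unfolding is_eigenvalue_def by auto
    have lim: "((\<lambda>z. q z / p z) \<longlongrightarrow> mu_s_plus \<delta> c lam) at_top" using pt unfolding proj_tendsto_def by auto
    have "mu_u_plus \<delta> c lam \<le> mu_s_plus \<delta> c lam"
    proof (rule tendsto_lowerbound[OF lim])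
      show "\<forall>\<^sub>F z in at_top. mu_u_plus \<delta> c lam \<le> q z / p z"
      proof (rule always_eventually, rule allI)
        fix z show "mu_u_plus \<delta> c lam \<le> q z / p z"
          using frame_above[OF a(1) disc[OF less_imp_le[OF that]] unn fr, of z] by linarith
      qed
    qed simp
    thus False using slt[OF that] by simp
  qed
  have "{lam. lam\<^sub>1 < lam \<and> lam < lam\<^sub>2 \<and> is_eigenvalue \<delta> c u lam} = {}"
    using noeig a(8) by fastforce
  hence E: "{lam. lam\<^sub>1 < lam \<and> lam < lam\<^sub>2 \<and> is_eigenvalue \<delta> c u lam} = {}" .
  show ?thesis unfolding E using N1 N2 by simp
qed

end
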